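(* Let $q$ be a self-join-free Boolean conjunctive query. Let $Z\to w$ be a functional dependency that is internal to $q$. Let $\vec z$ be a sequence of distinct variables with set of variables equal to $Z$, and let $q'=q\cup\{N^{\mathsf{c}}(\underline{\vec z},w)\}$ where $N$ is a fresh relation name of mode $\mathsf{c}$ whose primary key consists of the positions of $\vec z$. Then (1) there exists a first-order reduction from $\mathsf{CERTAINTY}(q)$ to $\mathsf{CERTAINTY}(q')$; and (2) if the attack graph of $q$ contains no strong cycle, then the attack graph of $q'$ contains no strong cycle.
   Context: Every relation name has a signature $[n,k]$ ($1\le k\le n$; primary-key positions $1,\dots,k$) and a mode in $\{\mathsf{c},\mathsf{i}\}$. For an atom $F$, $\mathrm{key}(F)$ = variables at primary-key positions, $\mathrm{vars}(F)$ = all its variables. Facts are variable-free atoms; key-equal facts share relation name and primary-key values. A database is a finite set of facts with no two distinct key-equal facts of mode $\mathsf{c}$; a repair is a maximal subset without two distinct key-equal facts. A self-join-free Boolean conjunctive query is a finite set of atoms with distinct relation names (existentially closed conjunction). $\mathsf{CERTAINTY}(q)$: does every repair of the input database satisfy $q$? A first-order reduction is a mapping of databases defined by first-order queries preserving yes/no answers. $\mathcal{K}(p)=\{\mathrm{key}(F)\to\mathrm{vars}(F)\mid F\in p\}$; $q^{\mathsf{c}}$ = atoms of mode $\mathsf{c}$; $F^{+,q}$ = variables $x$ with $\mathcal{K}(q\setminus\{F\})\cup\mathcal{K}(q^{\mathsf{c}})\models\mathrm{key}(F)\to x$. $F$ attacks $G$ ($F\ne G$) iff there are atoms $F_0=F,\dots,F_\ell=G$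 of $q$ and variables $x_i\in(\mathrm{vars}(F_{i-1})\cap\mathrm{vars}(F_i))\setminus F^{+,q}$. An attack is weak if $\mathcal{K}(q)\models\mathrm{key}(F)\to\mathrm{key}(G)$, else strong; a cycle is strong if it contains a strong attack. $F$ attacks a variable $x$ if $F$ attacks $N'(x)$ in $q\cup\{N'(x)\}$ for a fresh $N'$ of signature $[1,1]$. A sequential proof for $\mathcal{K}(q)\models Z\to w$ is a sequence $F_1,\dots,F_\ell$ of atoms of $q$ with $\mathrm{key}(F_i)\subseteq Z\cup\bigcup_{j<i}\mathrm{vars}(F_j)$ and $w\in\mathrm{vars}(F_k)$ for some $k$. $Z\to w$ is internal to $q$ if (i) some sequential proof for $\mathcal{K}(q)\models Z\to w$ contains no atom attacking a variable of $Z\cup\{w\}$, and (ii) $Z\subseteq\mathrm{vars}(F)$ for some $F\in q$. *)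

theory Defs
  imports Main
begin

datatype mode = ModeC | ModeI

text \<open>A schema assigns to every relation name its arity n, the length k of its
  primary key (positions 1..k) and its mode.\<close>
record 'r schema =
  arity  :: "'r \<Rightarrow> nat"
  keylen :: "'r \<Rightarrow> nat"
  rmode  :: "'r \<Rightarrow> mode"

definition wf_schema :: "'r schema \<Rightarrow> bool" where
  "wf_schema S \<longleftrightarrow> (\<forall>R. 1 \<le> keylen S R \<and> keylen S R \<le> arity S R)"

datatype ('v, 'c) qterm = Var 'v | Cst 'c

type_synonym ('r, 'v, 'c) atom = "'r \<times> ('v, 'c) qterm list"
type_synonym ('r, 'c) fact = "'r \<times> 'c list"

definition vars :: "('r, 'v, 'c) atom \<Rightarrow> 'v set" where
  "vars F = {x. Var x \<in> set (snd F)}"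

definition key :: "'r schema \<Rightarrow> ('r, 'v, 'c) atom \<Rightarrow> 'v set" where
  "key S F = {x. Var x \<in> set (take (keylen S (fst F)) (snd F))}"

definition sjf_query :: "'r schema \<Rightarrow> ('r, 'v, 'c) atom set \<Rightarrow> bool" where
  "sjf_query S q \<longleftrightarrow> finite q \<and> (\<forall>F\<in>q. length (snd F) = arity S (fst F)) \<and> inj_on fst q"

definition key_equal :: "'r schema \<Rightarrow> ('r, 'c) fact \<Rightarrow> ('r, 'c) fact \<Rightarrow> bool" where
  "key_equal S A B \<longleftrightarrow> fst A = fst B \<and>
      take (keylen S (fst A)) (snd A) = take (keylen S (fst B)) (snd B)"

definition consistent :: "'r schema \<Rightarrow> ('r, 'c) fact set \<Rightarrow> bool" where
  "consistent S r \<longleftrightarrow> (\<forall>A\<in>r. \<forall>B\<in>r. key_equal S A B \<longrightarrow> A = B)"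

definition is_db :: "'r schema \<Rightarrow> ('r, 'c) fact set \<Rightarrow> bool" where
  "is_db S db \<longleftrightarrow> finite db \<and> (\<forall>A\<in>db. length (snd A) = arity S (fst A)) \<and>
      (\<forall>A\<in>db. \<forall>B\<in>db. rmode S (fst A) = ModeC \<and> key_equal S A B \<longrightarrow> A = B)"

definition is_repair :: "'r schema \<Rightarrow> ('r, 'c) fact set \<Rightarrow> ('r, 'c) fact set \<Rightarrow> bool" where
  "is_repair S db r \<longleftrightarrow> r \<subseteq> db \<and> consistent S r \<and>
      (\<forall>r'. r \<subseteq> r' \<and> r' \<subseteq> db \<and> consistent S r' \<longrightarrow> r' = r)"

fun inst :: "('v \<Rightarrow> 'c) \<Rightarrow> ('v, 'c) qterm \<Rightarrow> 'c" where
  "inst \<theta> (Var x) = \<theta> x"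
| "inst \<theta> (Cst c) = c"

definition satisfies :: "('r, 'c) fact set \<Rightarrow> ('r, 'v, 'c) atom set \<Rightarrow> bool" where
  "satisfies r q \<longleftrightarrow> (\<exists>\<theta>. \<forall>F\<in>q. (fst F, map (inst \<theta>) (snd F)) \<in> r)"

definition certainty :: "'r schema \<Rightarrow> ('r, 'v, 'c) atom set \<Rightarrow> ('r, 'c) fact set set" where
  "certainty S q = {db. is_db S db \<and> (\<forall>r. is_repair S db r \<longrightarrow> satisfies r q)}"

datatype 'c fterm = FVar nat | FConst 'c

datatype ('r, 'c) fo =
    FAtom 'r "'c fterm list"
  | FEq "'c fterm" "'c fterm"
  | FNot "('r, 'c) fo"
  | FAnd "('r, 'c) fo" "('r, 'c) fo"
  | FEx nat "('r, 'c) fo"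

fun fterm_val :: "(nat \<Rightarrow> 'c) \<Rightarrow> 'c fterm \<Rightarrow> 'c" where
  "fterm_val \<sigma> (FVar i) = \<sigma> i"
| "fterm_val \<sigma> (FConst c) = c"

fun fterm_consts :: "'c fterm \<Rightarrow> 'c set" where
  "fterm_consts (FVar i) = {}"
| "fterm_consts (FConst c) = {c}"

fun fterm_fv :: "'c fterm \<Rightarrow> nat set" where
  "fterm_fv (FVar i) = {i}"
| "fterm_fv (FConst c) = {}"

fun fo_consts :: "('r, 'c) fo \<Rightarrow> 'c set" where
  "fo_consts (FAtom R ts) = (\<Union>t\<in>set ts. fterm_consts t)"
| "fo_consts (FEq s t) = fterm_consts s \<union> fterm_consts t"
| "fo_consts (FNot \<phi>) = fo_consts \<phi>"
| "fo_consts (FAnd \<phi> \<psi>) = fo_consts \<phi> \<union> fo_consts \<psi>"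
| "fo_consts (FEx x \<phi>) = fo_consts \<phi>"

fun fo_fv :: "('r, 'c) fo \<Rightarrow> nat set" where
  "fo_fv (FAtom R ts) = (\<Union>t\<in>set ts. fterm_fv t)"
| "fo_fv (FEq s t) = fterm_fv s \<union> fterm_fv t"
| "fo_fv (FNot \<phi>) = fo_fv \<phi>"
| "fo_fv (FAnd \<phi> \<psi>) = fo_fv \<phi> \<union> fo_fv \<psi>"
| "fo_fv (FEx x \<phi>) = fo_fv \<phi> - {x}"

text \<open>Active-domain semantics: quantifiers range over the domain D.\<close>
fun fo_eval :: "'c set \<Rightarrow> ('r, 'c) fact set \<Rightarrow> (nat \<Rightarrow> 'c) \<Rightarrow> ('r, 'c) fo \<Rightarrow> bool" where
  "fo_eval D db \<sigma> (FAtom R ts) = ((R, map (fterm_val \<sigma>) ts) \<in> db)"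
| "fo_eval D db \<sigma> (FEq s t) = (fterm_val \<sigma> s = fterm_val \<sigma> t)"
| "fo_eval D db \<sigma> (FNot \<phi>) = (\<not> fo_eval D db \<sigma> \<phi>)"
| "fo_eval D db \<sigma> (FAnd \<phi> \<psi>) = (fo_eval D db \<sigma> \<phi> \<and> fo_eval D db \<sigma> \<psi>)"
| "fo_eval D db \<sigma> (FEx x \<phi>) = (\<exists>a\<in>D. fo_eval D db (\<sigma>(x := a)) \<phi>)"

definition adom :: "('r, 'c) fact set \<Rightarrow> 'c set" where
  "adom db = (\<Union>A\<in>db. set (snd A))"

text \<open>The database mapping defined by a finite family of first-order queries:
  for each output relation name R in T, the R-facts of the output are the tuples
  (of length arity R) satisfying the query \<Phi> R, whose free variables are
  0,...,arity R - 1 (variable i gives position i).\<close>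
definition fo_map :: "'r schema \<Rightarrow> 'r set \<Rightarrow> ('r \<Rightarrow> ('r, 'c) fo) \<Rightarrow> ('r, 'c) fact set \<Rightarrow> ('r, 'c) fact set" where
  "fo_map S T \<Phi> db = {(R, as). R \<in> T \<and> length as = arity S R \<and>
      set as \<subseteq> adom db \<union> fo_consts (\<Phi> R) \<and>
      fo_eval (adom db \<union> fo_consts (\<Phi> R)) db (\<lambda>i. as ! i) (\<Phi> R)}"

definition fo_reduction :: "'r schema \<Rightarrow> ('r, 'c) fact set set \<Rightarrow> ('r, 'c) fact set set \<Rightarrow> bool" where
  "fo_reduction S P P' \<longleftrightarrow> (\<exists>T \<Phi>. finite T \<and> (\<forall>R\<in>T. fo_fv (\<Phi> R) \<subseteq> {..<arity S R}) \<and>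
      (\<forall>db. is_db S db \<longrightarrow> is_db S (fo_map S T \<Phi> db) \<and>
                           (db \<in> P \<longleftrightarrow> fo_map S T \<Phi> db \<in> P')))"

inductive_set fd_closure :: "('v set \<times> 'v set) set \<Rightarrow> 'v set \<Rightarrow> 'v set"
  for \<Sigma> :: "('v set \<times> 'v set) set" and X :: "'v set" where
  base: "x \<in> X \<Longrightarrow> x \<in> fd_closure \<Sigma> X"
| step: "(L, R) \<in> \<Sigma> \<Longrightarrow> (\<forall>l\<in>L. l \<in> fd_closure \<Sigma> X) \<Longrightarrow> y \<in> R \<Longrightarrow> y \<in> fd_closure \<Sigma> X"

definition fd_entails :: "('v set \<times> 'v set) set \<Rightarrow> 'v set \<Rightarrow> 'v \<Rightarrow> bool" where
  "fd_entails \<Sigma> X y \<longleftrightarrow> y \<in> fd_closure \<Sigma> X"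

definition Kfd :: "'r schema \<Rightarrow> ('r, 'v, 'c) atom set \<Rightarrow> ('v set \<times> 'v set) set" where
  "Kfd S p = {(key S F, vars F) | F. F \<in> p}"

definition cpart :: "'r schema \<Rightarrow> ('r, 'v, 'c) atom set \<Rightarrow> ('r, 'v, 'c) atom set" where
  "cpart S q = {F \<in> q. rmode S (fst F) = ModeC}"

definition Fplus :: "'r schema \<Rightarrow> ('r, 'v, 'c) atom set \<Rightarrow> ('r, 'v, 'c) atom \<Rightarrow> 'v set" where
  "Fplus S q F = {x. fd_entails (Kfd S (q - {F}) \<union> Kfd S (cpart S q)) (key S F) x}"

definition att_step :: "'r schema \<Rightarrow> ('r, 'v, 'c) atom set \<Rightarrow> ('r, 'v, 'c) atom
    \<Rightarrow> (('r, 'v, 'c) atom \<times> ('r, 'v, 'c) atom) set" where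
  "att_step S q F = {(A, B). A \<in> q \<and> B \<in> q \<and> (\<exists>x. x \<in> vars A \<inter> vars B \<and> x \<notin> Fplus S q F)}"

definition attacks :: "'r schema \<Rightarrow> ('r, 'v, 'c) atom set \<Rightarrow> ('r, 'v, 'c) atom \<Rightarrow> ('r, 'v, 'c) atom \<Rightarrow> bool" where
  "attacks S q F G \<longleftrightarrow> F \<in> q \<and> G \<in> q \<and> F \<noteq> G \<and> (F, G) \<in> (att_step S q F)\<^sup>+"

definition weak_attack :: "'r schema \<Rightarrow> ('r, 'v, 'c) atom set \<Rightarrow> ('r, 'v, 'c) atom \<Rightarrow> ('r, 'v, 'c) atom \<Rightarrow> bool" where
  "weak_attack S q F G \<longleftrightarrow> attacks S q F G \<and> (\<forall>y\<in>key S G. fd_entails (Kfd S q) (key S F) y)"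

definition strong_attack :: "'r schema \<Rightarrow> ('r, 'v, 'c) atom set \<Rightarrow> ('r, 'v, 'c) atom \<Rightarrow> ('r, 'v, 'c) atom \<Rightarrow> bool" where
  "strong_attack S q F G \<longleftrightarrow> attacks S q F G \<and> \<not> (\<forall>y\<in>key S G. fd_entails (Kfd S q) (key S F) y)"

definition has_strong_cycle :: "'r schema \<Rightarrow> ('r, 'v, 'c) atom set \<Rightarrow> bool" where
  "has_strong_cycle S q \<longleftrightarrow> (\<exists>Fs. Fs \<noteq> [] \<and> distinct Fs \<and>
     (\<forall>i<length Fs. attacks S q (Fs ! i) (Fs ! (Suc i mod length Fs))) \<and>
     (\<exists>i<length Fs. strong_attack S q (Fs ! i) (Fs ! (Suc i mod length Fs))))"

text \<open>F attacks the variable x: F attacks N'(x) in q \<union> {N'(x)} for a fresh N' of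
  signature [1,1].  Unfolded: adding N'(x) only adds the trivial dependency
  {x} \<rightarrow> {x}, so F^{+} is unchanged, and a witnessing sequence ends with an
  atom of q containing x (x not in F^{+}) followed by N'(x).\<close>
definition attacks_var :: "'r schema \<Rightarrow> ('r, 'v, 'c) atom set \<Rightarrow> ('r, 'v, 'c) atom \<Rightarrow> 'v \<Rightarrow> bool" where
  "attacks_var S q F x \<longleftrightarrow> F \<in> q \<and> x \<notin> Fplus S q F \<and>
     (\<exists>G\<in>q. x \<in> vars G \<and> (F, G) \<in> (att_step S q F)\<^sup>*)"

definition seq_proof :: "'r schema \<Rightarrow> ('r, 'v, 'c) atom set \<Rightarrow> 'v set \<Rightarrow> 'v \<Rightarrow> ('r, 'v, 'c) atom list \<Rightarrow> bool" where
  "seq_proof S q Z w Fs \<longleftrightarrow> set Fs \<subseteq> q \<and>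
     (\<forall>i<length Fs. key S (Fs ! i) \<subseteq> Z \<union> (\<Union>j<i. vars (Fs ! j))) \<and>
     (\<exists>k<length Fs. w \<in> vars (Fs ! k))"

definition internal_fd :: "'r schema \<Rightarrow> ('r, 'v, 'c) atom set \<Rightarrow> 'v set \<Rightarrow> 'v \<Rightarrow> bool" where
  "internal_fd S q Z w \<longleftrightarrow>
     (\<exists>Fs. seq_proof S q Z w Fs \<and> (\<forall>F\<in>set Fs. \<forall>x\<in>insert w Z. \<not> attacks_var S q F x)) \<and>
     (\<exists>F\<in>q. Z \<subseteq> vars F)"

end

theory Submission
  imports Defs
begin

definition img :: "('v \<Rightarrow> 'c) \<Rightarrow> ('r, 'v, 'c) atom \<Rightarrow> ('r, 'c) fact" where
  "img \<theta> F = (fst F, map (inst \<theta>) (snd F))"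

definition emb :: "('r, 'c) fact set \<Rightarrow> ('r, 'v, 'c) atom set \<Rightarrow> ('v \<Rightarrow> 'c) \<Rightarrow> bool" where
  "emb r q \<theta> \<longleftrightarrow> (\<forall>F\<in>q. img \<theta> F \<in> r)"

lemma satisfies_emb: "satisfies r q \<longleftrightarrow> (\<exists>\<theta>. emb r q \<theta>)"
  by (simp add: satisfies_def emb_def img_def)

lemma fst_img[simp]: "fst (img \<theta> F) = fst F" by (simp add: img_def)

lemma inst_agree: "(\<forall>x\<in>vars F. \<theta> x = \<mu> x) \<Longrightarrow> t \<in> set (snd F) \<Longrightarrow> inst \<theta> t = inst \<mu> t"
  by (cases t) (auto simp: vars_def)

lemma img_agree: "(\<forall>x\<in>vars F. \<theta> x = \<mu> x) \<Longrightarrow> img \<theta> F = img \<mu> F"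
  unfolding img_def using inst_agree[of F \<theta> \<mu>] by auto

lemma img_eq_agree: "img \<theta> F = img \<mu> F \<Longrightarrow> x \<in> vars F \<Longrightarrow> \<theta> x = \<mu> x"
  unfolding img_def vars_def by (auto simp: map_eq_conv dest!: bspec)

lemma key_agree: "(\<forall>x\<in>key S F. \<theta> x = \<mu> x) \<Longrightarrow> key_equal S (img \<theta> F) (img \<mu> F)"
  unfolding img_def key_equal_def key_def
  apply (simp add: take_map map_eq_conv)
  by (metis inst.simps qterm.exhaust)

lemma key_equal_agree: "key_equal S (img \<theta> F) (img \<mu> F) \<Longrightarrow> x \<in> key S F \<Longrightarrow> \<theta> x = \<mu> x"
  unfolding img_def key_equal_def key_def
  by (auto simp: take_map map_eq_conv dest!: bspec)

lemma key_equal_sym: "key_equal S A B \<Longrightarrow> key_equal S B A"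
  by (auto simp: key_equal_def)
lemma key_equal_trans: "key_equal S A B \<Longrightarrow> key_equal S B C \<Longrightarrow> key_equal S A C"
  by (auto simp: key_equal_def)
lemma key_equal_refl: "key_equal S A A"
  by (auto simp: key_equal_def)

lemma key_sub_vars: "key S F \<subseteq> vars F"
  by (auto simp: key_def vars_def dest: in_set_takeD)

lemma repair_conflict:
  assumes "is_repair S db r" "A \<in> db" "A \<notin> r"
  shows "\<exists>y\<in>r. key_equal S A y \<and> y \<noteq> A"
proof -
  have "\<not> consistent S (insert A r)"
    using assms unfolding is_repair_def by blast
  then obtain a b where ab: "a \<in> insert A r" "b \<in> insert A r" "key_equal S a b" "a \<noteq> b"
    unfolding consistent_def by blast
  have cr: "consistent S r" using assms unfolding is_repair_def by blast
  show ?thesis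
    using ab cr unfolding consistent_def by (auto intro: key_equal_sym)
qed

lemma repair_swap:
  assumes r: "is_repair S db r" and A: "A \<in> r" and A': "A' \<in> db" and ke: "key_equal S A A'"
  shows "is_repair S db (insert A' (r - {A}))"
proof -
  have rdb: "r \<subseteq> db" and cr: "consistent S r" using r by (auto simp: is_repair_def)
  have c1: "consistent S (insert A' (r - {A}))"
    unfolding consistent_def
  proof (intro ballI impI)
    fix a b assume a: "a \<in> insert A' (r - {A})" and b: "b \<in> insert A' (r - {A})" and k: "key_equal S a b"
    have H: "\<forall>y\<in>r. key_equal S A' y \<longrightarrow> y = A"
      using cr A ke by (metis consistent_def key_equal_sym key_equal_trans)
    show "a = b"
    proof (cases "a = A'")
      case True
      then show ?thesis using b k H by auto
    next
      case False
      then have "a \<in> r" "a \<noteq> A" using a by auto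
      then show ?thesis using b k H cr key_equal_sym unfolding consistent_def by blast
    qed
  qed
  show ?thesis unfolding is_repair_def
  proof (intro conjI allI impI)
    show "insert A' (r - {A}) \<subseteq> db" using rdb A' by auto
    show "consistent S (insert A' (r - {A}))" by (rule c1)
    fix r' assume h: "insert A' (r - {A}) \<subseteq> r' \<and> r' \<subseteq> db \<and> consistent S r'"
    show "r' = insert A' (r - {A})"
    proof (rule ccontr)
      assume "r' \<noteq> insert A' (r - {A})"
      then obtain x where x: "x \<in> r'" "x \<notin> insert A' (r - {A})" using h by blast
      show False
      proof (cases "x = A")
        case True
        then show ?thesis using h x ke by (simp add: consistent_def)
      next
        case False
        then have "x \<notin> r" using x by auto
        then obtain y where y: "y \<in> r" "key_equal S x y" "y \<noteq> x"
          using repair_conflict[OF r, of x] x h by blast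
        show False
        proof (cases "y = A")
          case True
          then have "key_equal S x A'" using y ke key_equal_trans by blast
          then show False using h x by (auto simp: consistent_def)
        next
          case False
          then have "y \<in> r'" using y h by auto
          then show False using h x y unfolding consistent_def by blast
        qed
      qed
    qed
  qed
qed

lemma repair_ext:
  assumes fin: "finite db" and r0: "r0 \<subseteq> db" "consistent S r0"
  shows "\<exists>r. r0 \<subseteq> r \<and> is_repair S db r"
proof -
  define P where "P = (\<lambda>r. r0 \<subseteq> r \<and> r \<subseteq> db \<and> consistent S r)"
  have P0: "P r0" using r0 by (simp add: P_def)
  have bnd: "\<forall>y. P y \<longrightarrow> card y < Suc (card db)"
  proof (intro allI impI)
    fix y assume "P y"
    then have "y \<subseteq> db" by (simp add: P_def)
    then have "card y \<le> card db" by (rule card_mono[OF fin])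
    then show "card y < Suc (card db)" by simp
  qed
  obtain r where r: "P r" "\<forall>y. P y \<longrightarrow> card y \<le> card r"
    using ex_has_greatest_nat[of P r0 card "Suc (card db)", OF P0 bnd] by blast
  have "is_repair S db r" unfolding is_repair_def
  proof (intro conjI allI impI)
    show "r \<subseteq> db" "consistent S r" using r by (auto simp: P_def)
    fix r' assume h: "r \<subseteq> r' \<and> r' \<subseteq> db \<and> consistent S r'"
    then have "P r'" using r(1) by (auto simp: P_def)
    then have "card r' \<le> card r" using r by blast
    moreover have "finite r'" using h fin finite_subset by blast
    ultimately show "r' = r" using h card_seteq[of r' r] by simp
  qed
  then show ?thesis using r by (auto simp: P_def)
qed

lemma star_in_q': "(F, G) \<in> (att_step S q H)\<^sup>* \<Longrightarrow> F \<in> q \<Longrightarrow> G \<in> q"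
  by (induction rule: rtrancl_induct) (auto simp: att_step_def)
lemma star_in_q: "F \<in> q \<Longrightarrow> (F, G) \<in> (att_step S q F)\<^sup>* \<Longrightarrow> G \<in> q"
  using star_in_q' by metis

lemma inst_in_adom: "img \<theta> G \<in> db \<Longrightarrow> x \<in> vars G \<Longrightarrow> \<theta> x \<in> adom db"
  unfolding adom_def img_def vars_def by force

lemma finite_adom: "finite db \<Longrightarrow> finite (adom db)"
  unfolding adom_def by auto

locale hard =
  fixes S :: "'r schema" and q :: "('r, 'v, 'c) atom set" and Z :: "'v set" and w :: 'v
    and zs :: "'v list" and Fs :: "('r, 'v, 'c) atom list" and db :: "('r, 'c) fact set"
  assumes sjf: "sjf_query S q"
    and sp: "seq_proof S q Z w Fs"
    and na: "\<forall>F\<in>set Fs. \<forall>x\<in>insert w Z. \<not> attacks_var S q F x"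
    and F0: "\<exists>F\<in>q. Z \<subseteq> vars F"
    and zsZ: "set zs = Z"
    and db: "is_db S db"
begin

definition VF where
  "VF F = {x. x \<notin> Fplus S q F \<and> (\<exists>G\<in>q. x \<in> vars G \<and> (F, G) \<in> (att_step S q F)\<^sup>*)}"

definition Pin where "Pin \<mu> \<longleftrightarrow> (\<forall>F\<in>set Fs. img \<mu> F \<in> db)"

definition SS where "SS r = {(map \<theta> zs, \<theta> w) | \<theta>. emb r q \<theta>}"

lemma Fs_q: "set Fs \<subseteq> q" using sp by (simp add: seq_proof_def)

lemma inj: "inj_on fst q" using sjf by (simp add: sjf_query_def)

lemma same_rel: "F \<in> q \<Longrightarrow> G \<in> q \<Longrightarrow> fst F = fst G \<Longrightarrow> F = G"
  using inj by (meson inj_onD)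

lemma nonreach: "G \<in> q \<Longrightarrow> (F, G) \<notin> (att_step S q F)\<^sup>* \<Longrightarrow> x \<in> vars G \<Longrightarrow> x \<notin> VF F"
proof
  assume G: "G \<in> q" and nr: "(F, G) \<notin> (att_step S q F)\<^sup>*" and x: "x \<in> vars G" and "x \<in> VF F"
  then obtain G' where G': "G' \<in> q" "x \<in> vars G'" "(F, G') \<in> (att_step S q F)\<^sup>*" "x \<notin> Fplus S q F"
    unfolding VF_def by blast
  then have "(G', G) \<in> att_step S q F" using G x unfolding att_step_def by blast
  then show False using G'(3) nr by (meson rtrancl.rtrancl_into_rtrancl)
qed

lemma VF_disj: "F \<in> set Fs \<Longrightarrow> x \<in> insert w Z \<Longrightarrow> x \<notin> VF F"
proof
  assume F: "F \<in> set Fs" and x: "x \<in> insert w Z" and v: "x \<in> VF F"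
  have "F \<in> q" using F Fs_q by blast
  then have "attacks_var S q F x" using v unfolding attacks_var_def VF_def by blast
  then show False using na F x by blast
qed

lemma fplus_agree:
  assumes r: "is_repair S db r" and F: "F \<in> q" and th: "emb r q \<theta>"
    and nu: "emb (insert A' (r - {img \<theta> F})) q \<nu>" and nuF: "img \<nu> F = A'"
    and A': "A' \<in> db" and ke: "key_equal S (img \<theta> F) A'"
    and x: "x \<in> Fplus S q F"
  shows "\<theta> x = \<nu> x"
proof -
  have rdb: "r \<subseteq> db" and cr: "consistent S r" using r by (auto simp: is_repair_def)
  have "x \<in> fd_closure (Kfd S (q - {F}) \<union> Kfd S (cpart S q)) (key S F)"
    using x by (simp add: Fplus_def fd_entails_def)
  then show ?thesis
  proof (induction rule: fd_closure.induct)
    case (base x)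
    then show ?case using key_equal_agree[of S \<theta> F \<nu> x] ke nuF by simp
  next
    case (step L R y)
    have "(L, R) \<in> Kfd S (q - {F}) \<or> (L, R) \<in> Kfd S (cpart S q)" using step by blast
    then obtain G where G: "G \<in> q" "L = key S G" "R = vars G" "G \<noteq> F \<or> rmode S (fst G) = ModeC"
      unfolding Kfd_def cpart_def by blast
    show ?case
    proof (cases "G = F")
      case True
      then have mc: "rmode S (fst (img \<theta> F)) = ModeC" using G by simp
      have "img \<theta> F \<in> db" using th F rdb by (auto simp: emb_def)
      moreover have "\<forall>A\<in>db. \<forall>B\<in>db. rmode S (fst A) = ModeC \<and> key_equal S A B \<longrightarrow> A = B"
        using db unfolding is_db_def by blast
      ultimately have "img \<theta> F = A'" using A' ke mc by blast
      then have "img \<theta> F = img \<nu> F" using nuF by simp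
      then show ?thesis using img_eq_agree[of \<theta> F \<nu> y] True step G(3) by simp
    next
      case False
      have k: "key_equal S (img \<theta> G) (img \<nu> G)" using step G(2) key_agree[of S G \<theta> \<nu>] by simp
      have t: "img \<theta> G \<in> r" using th G by (simp add: emb_def)
      have "fst (img \<nu> G) \<noteq> fst A'" using same_rel[of G F] nuF False G(1) F by auto
      then have "img \<nu> G \<in> r" using nu G by (auto simp: emb_def)
      then have "img \<theta> G = img \<nu> G" using k t cr by (simp add: consistent_def)
      then show ?thesis using img_eq_agree[of \<theta> G \<nu> y] step G(3) by simp
    qed
  qed
qed

lemma swap_SS:
  assumes r: "is_repair S db r" and F: "F \<in> set Fs" and th: "emb r q \<theta>"
    and A': "A' \<in> db" and ke: "key_equal S (img \<theta> F) A'"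
  shows "SS (insert A' (r - {img \<theta> F})) \<subseteq> SS r"
proof
  fix p assume "p \<in> SS (insert A' (r - {img \<theta> F}))"
  then obtain \<nu> where nu: "emb (insert A' (r - {img \<theta> F})) q \<nu>" and p: "p = (map \<nu> zs, \<nu> w)"
    unfolding SS_def by blast
  have Fq: "F \<in> q" using F Fs_q by blast
  have fA': "fst A' = fst F" using ke by (simp add: key_equal_def)
  have others: "img \<nu> G \<in> r" if "G \<in> q" "G \<noteq> F" for G
  proof -
    have "fst (img \<nu> G) \<noteq> fst A'" using fA' that Fq same_rel[of G F] by auto
    then show ?thesis using nu that by (auto simp: emb_def)
  qed
  show "p \<in> SS r"
  proof (cases "img \<nu> F = A'")
    case False
    then have "img \<nu> F \<in> r" using nu Fq by (auto simp: emb_def)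
    then have "emb r q \<nu>" using others unfolding emb_def by metis
    then show ?thesis using p unfolding SS_def by blast
  next
    case True
    define \<kappa> where "\<kappa> = (\<lambda>x. if x \<in> VF F then \<theta> x else \<nu> x)"
    have agr: "\<theta> x = \<nu> x" if "x \<in> Fplus S q F" for x
      using fplus_agree[OF r Fq th nu True A' ke that] .
    have "emb r q \<kappa>" unfolding emb_def
    proof
      fix G assume G: "G \<in> q"
      show "img \<kappa> G \<in> r"
      proof (cases "(F, G) \<in> (att_step S q F)\<^sup>*")
        case True
        have "img \<kappa> G = img \<theta> G"
          apply (rule img_agree)
          using True G agr unfolding \<kappa>_def VF_def by auto
        then show ?thesis using th G by (simp add: emb_def)
      next
        case False
        have "img \<kappa> G = img \<nu> G"
          apply (rule img_agree)
          using nonreach[OF G False] unfolding \<kappa>_def by auto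
        moreover have "G \<noteq> F" using False by auto
        ultimately show ?thesis using others G by simp
      qed
    qed
    moreover have "map \<kappa> zs = map \<nu> zs" "\<kappa> w = \<nu> w"
      using VF_disj[OF F] zsZ unfolding \<kappa>_def by auto
    ultimately show ?thesis using p unfolding SS_def by (metis (mono_tags, lifting) mem_Collect_eq)
  qed
qed

end

context hard begin

lemma key_cover: "i < length Fs \<Longrightarrow> key S (Fs ! i) \<subseteq> Z \<union> (\<Union>j<i. vars (Fs ! j))"
  using sp by (simp add: seq_proof_def)

lemma path_agree:
  assumes c: "consistent S r"
    and inr: "\<forall>m<n. img \<theta> (Fs ! m) \<in> r \<and> img \<mu> (Fs ! m) \<in> r"
    and zag: "\<forall>z\<in>Z. \<theta> z = \<mu> z" and n: "n \<le> length Fs"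
  shows "\<forall>m<n. \<forall>x\<in>vars (Fs ! m). \<theta> x = \<mu> x"
  using inr n
proof (induction n)
  case 0
  then show ?case by simp
next
  case (Suc n)
  then have IH: "\<forall>m<n. \<forall>x\<in>vars (Fs ! m). \<theta> x = \<mu> x" by simp
  have "\<forall>x\<in>key S (Fs ! n). \<theta> x = \<mu> x"
    using key_cover[of n] Suc.prems(2) IH zag by fastforce
  then have "key_equal S (img \<theta> (Fs ! n)) (img \<mu> (Fs ! n))" by (rule key_agree)
  moreover have "img \<theta> (Fs ! n) \<in> r" "img \<mu> (Fs ! n) \<in> r" using Suc.prems by auto
  ultimately have "img \<theta> (Fs ! n) = img \<mu> (Fs ! n)" using c by (simp add: consistent_def)
  then have "\<forall>x\<in>vars (Fs ! n). \<theta> x = \<mu> x" using img_eq_agree by metis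
  then show ?case using IH less_Suc_eq by auto
qed

lemma kill:
  assumes mu: "Pin \<mu>"
  shows "is_repair S db r \<Longrightarrow> emb r q \<theta> \<Longrightarrow> map \<theta> zs = map \<mu> zs \<Longrightarrow> \<theta> w \<noteq> \<mu> w
    \<Longrightarrow> n \<le> length Fs \<Longrightarrow> \<forall>m<n. \<forall>x\<in>vars (Fs ! m). \<theta> x = \<mu> x
    \<Longrightarrow> \<exists>r'. is_repair S db r' \<and> SS r' \<subseteq> SS r \<and> (map \<theta> zs, \<theta> w) \<notin> SS r'"
proof (induction "length Fs - n" arbitrary: r \<theta> n rule: less_induct)
  case less
  note r = less.prems(1) and th = less.prems(2) and zeq = less.prems(3) and wne = less.prems(4)
    and nle = less.prems(5) and ag = less.prems(6)
  have zag: "\<forall>z\<in>Z. \<theta> z = \<mu> z" using zeq zsZ by (auto simp: map_eq_conv)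
  obtain k where k: "k < length Fs" "w \<in> vars (Fs ! k)" using sp by (auto simp: seq_proof_def)
  have nlt: "n < length Fs"
  proof (rule ccontr)
    assume "\<not> n < length Fs"
    then have "n = length Fs" using nle by simp
    then have "\<theta> w = \<mu> w" using ag k by auto
    then show False using wne by simp
  qed
  show ?case
  proof (cases "\<forall>x\<in>vars (Fs ! n). \<theta> x = \<mu> x")
    case True
    have agS: "\<forall>m<Suc n. \<forall>x\<in>vars (Fs ! m). \<theta> x = \<mu> x" using True ag less_Suc_eq by auto
    have lt: "length Fs - Suc n < length Fs - n" using nlt by simp
    have sn: "Suc n \<le> length Fs" using nlt by simp
    show ?thesis by (rule less.hyps[OF lt r th zeq wne sn agS])
  next
    case False
    then obtain x0 where x0: "x0 \<in> vars (Fs ! n)" "\<theta> x0 \<noteq> \<mu> x0" by blast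
    define F where "F = Fs ! n"
    have Fin: "F \<in> set Fs" using nlt F_def by simp
    then have Fq: "F \<in> q" using Fs_q by blast
    define A where "A = img \<theta> F"
    define A' where "A' = img \<mu> F"
    have rdb: "r \<subseteq> db" and cr: "consistent S r" using r by (auto simp: is_repair_def)
    have Ar: "A \<in> r" using th Fq A_def by (simp add: emb_def)
    have A'db: "A' \<in> db" using mu Fin A'_def by (simp add: Pin_def)
    have "\<forall>x\<in>key S F. \<theta> x = \<mu> x" using key_cover[OF nlt] ag zag F_def by fastforce
    then have ke: "key_equal S A A'" using key_agree A_def A'_def by metis
    define r1 where "r1 = insert A' (r - {A})"
    have r1: "is_repair S db r1" using repair_swap[OF r Ar A'db ke] r1_def by simp
    have sub1: "SS r1 \<subseteq> SS r" using swap_SS[OF r Fin th A'db] ke A_def r1_def by simp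
    show ?thesis
    proof (cases "(map \<theta> zs, \<theta> w) \<in> SS r1")
      case False
      then show ?thesis using r1 sub1 by blast
    next
      case True
      then obtain \<theta>1 where th1: "emb r1 q \<theta>1" "map \<theta>1 zs = map \<theta> zs" "\<theta>1 w = \<theta> w"
        unfolding SS_def by auto
      have cr1: "consistent S r1" using r1 by (simp add: is_repair_def)
      have inr1: "\<forall>m<Suc n. img \<theta>1 (Fs ! m) \<in> r1 \<and> img \<mu> (Fs ! m) \<in> r1"
      proof (intro allI impI conjI)
        fix m assume m: "m < Suc n"
        then have "Fs ! m \<in> q" using nlt Fs_q by auto
        then show "img \<theta>1 (Fs ! m) \<in> r1" using th1 by (simp add: emb_def)
        show "img \<mu> (Fs ! m) \<in> r1"
        proof (cases "m = n")
          case True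
          then show ?thesis using r1_def A'_def F_def by simp
        next
          case False
          then have mn: "m < n" using m by simp
          then have eq: "img \<mu> (Fs ! m) = img \<theta> (Fs ! m)" using ag img_agree by metis
          have inq: "Fs ! m \<in> q" using mn nlt Fs_q by auto
          have "img \<theta> (Fs ! m) \<noteq> A"
          proof
            assume "img \<theta> (Fs ! m) = A"
            then have "fst (Fs ! m) = fst F" using A_def by (metis fst_img)
            then have "Fs ! m = F" using same_rel inq Fq by blast
            then show False using ag mn x0 F_def by metis
          qed
          moreover have "img \<theta> (Fs ! m) \<in> r" using th inq by (simp add: emb_def)
          ultimately show ?thesis using eq r1_def by simp
        qed
      qed
      have zag1: "\<forall>z\<in>Z. \<theta>1 z = \<mu> z" using th1(2) zeq zsZ by (auto simp: map_eq_conv)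
      have ag1: "\<forall>m<Suc n. \<forall>x\<in>vars (Fs ! m). \<theta>1 x = \<mu> x"
        using path_agree[OF cr1 inr1 zag1] nlt by simp
      have lt: "length Fs - Suc n < length Fs - n" using nlt by simp
      have sn: "Suc n \<le> length Fs" using nlt by simp
      have z1: "map \<theta>1 zs = map \<mu> zs" using th1(2) zeq by simp
      have w1: "\<theta>1 w \<noteq> \<mu> w" using th1(3) wne by simp
      have "\<exists>r'. is_repair S db r' \<and> SS r' \<subseteq> SS r1 \<and> (map \<theta>1 zs, \<theta>1 w) \<notin> SS r'"
        by (rule less.hyps[OF lt r1 th1(1) z1 w1 sn ag1])
      then show ?thesis using sub1 th1 by auto
    qed
  qed
qed

lemma SS_finite:
  assumes r: "is_repair S db r"
  shows "finite (SS r)"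
proof -
  have fdb: "finite db" using db by (simp add: is_db_def)
  obtain F where F: "F \<in> q" "Z \<subseteq> vars F" using F0 by blast
  obtain k where k: "k < length Fs" "w \<in> vars (Fs ! k)" using sp by (auto simp: seq_proof_def)
  have kq: "Fs ! k \<in> q" using k Fs_q by auto
  have rdb: "r \<subseteq> db" using r by (simp add: is_repair_def)
  have "SS r \<subseteq> {c. set c \<subseteq> adom db \<and> length c = length zs} \<times> adom db"
  proof
    fix p assume "p \<in> SS r"
    then obtain \<theta> where th: "emb r q \<theta>" "p = (map \<theta> zs, \<theta> w)" unfolding SS_def by blast
    have "img \<theta> F \<in> db" using th F rdb by (auto simp: emb_def)
    then have "\<forall>z\<in>set zs. \<theta> z \<in> adom db" using F(2) zsZ inst_in_adom[of \<theta> F db] by auto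
    moreover have "img \<theta> (Fs ! k) \<in> db" using th kq rdb by (auto simp: emb_def)
    then have "\<theta> w \<in> adom db" using k(2) inst_in_adom[of \<theta> "Fs ! k" db] by auto
    ultimately show "p \<in> {c. set c \<subseteq> adom db \<and> length c = length zs} \<times> adom db"
      using th by auto
  qed
  moreover have "finite ({c. set c \<subseteq> adom db \<and> length c = length zs} \<times> adom db)"
    using finite_adom[OF fdb] finite_lists_length_eq[of "adom db" "length zs"] by blast
  ultimately show ?thesis by (rule finite_subset)
qed

lemma no_emb:
  "is_repair S db r \<Longrightarrow> (\<forall>c d. (c, d) \<in> SS r \<longrightarrow> (\<exists>\<mu>. Pin \<mu> \<and> map \<mu> zs = c \<and> \<mu> w \<noteq> d))
   \<Longrightarrow> \<exists>r'. is_repair S db r' \<and> SS r' = {}"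
proof (induction "card (SS r)" arbitrary: r rule: less_induct)
  case less
  show ?case
  proof (cases "SS r = {}")
    case True
    then show ?thesis using less.prems by blast
  next
    case False
    then obtain c d where cd: "(c, d) \<in> SS r" by auto
    then obtain \<theta> where th: "emb r q \<theta>" "c = map \<theta> zs" "d = \<theta> w" unfolding SS_def by blast
    obtain \<mu> where mu: "Pin \<mu>" "map \<mu> zs = c" "\<mu> w \<noteq> d" using less.prems cd by blast
    have zz: "map \<theta> zs = map \<mu> zs" and ww: "\<theta> w \<noteq> \<mu> w" using th mu by auto
    have "\<exists>r'. is_repair S db r' \<and> SS r' \<subseteq> SS r \<and> (map \<theta> zs, \<theta> w) \<notin> SS r'"
      by (rule kill[OF mu(1) less.prems(1) th(1) zz ww, of 0]) auto
    then obtain r1 where r1: "is_repair S db r1" "SS r1 \<subseteq> SS r" "(c, d) \<notin> SS r1"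
      using th by blast
    have "SS r1 \<subset> SS r" using r1 cd by blast
    then have "card (SS r1) < card (SS r)" using SS_finite[OF less.prems(1)] psubset_card_mono by blast
    moreover have "\<forall>c d. (c, d) \<in> SS r1 \<longrightarrow> (\<exists>\<mu>. Pin \<mu> \<and> map \<mu> zs = c \<and> \<mu> w \<noteq> d)"
      using less.prems(2) r1(2) by blast
    ultimately show ?thesis using less.hyps[of r1] r1(1) by simp
  qed
qed

end

fun exl :: "nat list \<Rightarrow> ('r, 'c) fo \<Rightarrow> ('r, 'c) fo" where
  "exl [] \<phi> = \<phi>"
| "exl (i # is) \<phi> = FEx i (exl is \<phi>)"

lemma eval_exl:
  "fo_eval D db \<sigma> (exl is \<phi>) \<longleftrightarrow>
   (\<exists>\<nu>. (\<forall>i\<in>set is. \<nu> i \<in> D) \<and> fo_eval D db (\<lambda>j. if j \<in> set is then \<nu> j else \<sigma> j) \<phi>)"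
proof (induction "is" arbitrary: \<sigma>)
  case Nil
  then show ?case by simp
next
  case (Cons i "is")
  show ?case
  proof
    assume "fo_eval D db \<sigma> (exl (i # is) \<phi>)"
    then obtain a \<nu> where a: "a \<in> D" "\<forall>i\<in>set is. \<nu> i \<in> D"
      "fo_eval D db (\<lambda>j. if j \<in> set is then \<nu> j else (\<sigma>(i := a)) j) \<phi>"
      using Cons by auto
    define \<nu>' where "\<nu>' = \<nu>(i := if i \<in> set is then \<nu> i else a)"
    have eq: "(\<lambda>j. if j \<in> set is then \<nu> j else (\<sigma>(i := a)) j) =
              (\<lambda>j. if j \<in> set (i # is) then \<nu>' j else \<sigma> j)"
      by (rule ext) (auto simp: \<nu>'_def)
    have "\<forall>j\<in>set (i # is). \<nu>' j \<in> D" using a by (auto simp: \<nu>'_def)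
    then show "\<exists>\<nu>. (\<forall>i\<in>set (i # is). \<nu> i \<in> D) \<and>
      fo_eval D db (\<lambda>j. if j \<in> set (i # is) then \<nu> j else \<sigma> j) \<phi>"
      using a(3) eq by metis
  next
    assume "\<exists>\<nu>. (\<forall>i\<in>set (i # is). \<nu> i \<in> D) \<and>
      fo_eval D db (\<lambda>j. if j \<in> set (i # is) then \<nu> j else \<sigma> j) \<phi>"
    then obtain \<nu> where n: "\<forall>i\<in>set (i # is). \<nu> i \<in> D"
      "fo_eval D db (\<lambda>j. if j \<in> set (i # is) then \<nu> j else \<sigma> j) \<phi>" by blast
    have eq: "(\<lambda>j. if j \<in> set (i # is) then \<nu> j else \<sigma> j) =
              (\<lambda>j. if j \<in> set is then \<nu> j else (\<sigma>(i := \<nu> i)) j)"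
      by (rule ext) auto
    have "\<exists>\<nu>'. (\<forall>i\<in>set is. \<nu>' i \<in> D) \<and>
        fo_eval D db (\<lambda>j. if j \<in> set is then \<nu>' j else (\<sigma>(i := \<nu> i)) j) \<phi>"
      using n(1) n(2)[unfolded eq] by auto
    then have "fo_eval D db (\<sigma>(i := \<nu> i)) (exl is \<phi>)"
      using Cons.IH by blast
    then show "fo_eval D db \<sigma> (exl (i # is) \<phi>)" using n(1) by auto
  qed
qed

lemma fv_exl: "fo_fv (exl is \<phi>) = fo_fv \<phi> - set is"
  by (induction "is") auto

lemma consts_exl: "fo_consts (exl is \<phi>) = fo_consts \<phi>"
  by (induction "is") auto

fun conjl :: "('r, 'c) fo list \<Rightarrow> ('r, 'c) fo \<Rightarrow> ('r, 'c) fo" where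
  "conjl [] b = b"
| "conjl (f # fs) b = FAnd f (conjl fs b)"

lemma eval_conjl: "fo_eval D db \<sigma> (conjl fs b) \<longleftrightarrow> (\<forall>f\<in>set fs. fo_eval D db \<sigma> f) \<and> fo_eval D db \<sigma> b"
  by (induction fs) auto

lemma fv_conjl: "fo_fv (conjl fs b) = (\<Union>f\<in>set fs. fo_fv f) \<union> fo_fv b"
  by (induction fs) auto

lemma consts_conjl: "fo_consts (conjl fs b) = (\<Union>f\<in>set fs. fo_consts f) \<union> fo_consts b"
  by (induction fs) auto

lemma finite_fterm_consts: "finite (fterm_consts t)"
  by (cases t) auto

lemma finite_consts: "finite (fo_consts \<phi>)"
  by (induction \<phi>) (auto simp: finite_fterm_consts)

fun trt :: "('v \<Rightarrow> nat) \<Rightarrow> ('v, 'c) qterm \<Rightarrow> 'c fterm" where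
  "trt ix (Var x) = FVar (ix x)"
| "trt ix (Cst c) = FConst c"

lemma val_trt: "fterm_val \<sigma> (trt ix t) = inst (\<sigma> \<circ> ix) t"
  by (cases t) auto

definition atomf :: "('v \<Rightarrow> nat) \<Rightarrow> ('r, 'v, 'c) atom \<Rightarrow> ('r, 'c) fo" where
  "atomf ix F = FAtom (fst F) (map (trt ix) (snd F))"

lemma eval_atomf: "fo_eval D db \<sigma> (atomf ix F) \<longleftrightarrow> img (\<sigma> \<circ> ix) F \<in> db"
  by (simp add: atomf_def img_def val_trt comp_def)

lemma fv_trt: "fterm_fv (trt ix t) \<subseteq> {ix x | x. t = Var x}"
  by (cases t) auto

lemma fv_atomf: "fo_fv (atomf ix F) \<subseteq> ix ` vars F"
  unfolding atomf_def vars_def using fv_trt by fastforce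

definition bodyf :: "('v \<Rightarrow> nat) \<Rightarrow> ('r, 'v, 'c) atom list \<Rightarrow> 'v list \<Rightarrow> ('r, 'c) fo \<Rightarrow> ('r, 'c) fo" where
  "bodyf ix Fs zs b = conjl (map (atomf ix) Fs @ map (\<lambda>j. FEq (FVar (ix (zs ! j))) (FVar j)) [0..<length zs]) b"

definition PhiN :: "('v \<Rightarrow> nat) \<Rightarrow> 'v list \<Rightarrow> ('r, 'v, 'c) atom list \<Rightarrow> 'v list \<Rightarrow> 'v \<Rightarrow> ('r, 'c) fo" where
  "PhiN ix vl Fs zs w =
     FAnd (exl (map ix vl) (bodyf ix Fs zs (FEq (FVar (ix w)) (FVar (length zs)))))
          (FNot (exl (map ix vl) (bodyf ix Fs zs (FNot (FEq (FVar (ix w)) (FVar (length zs)))))))"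

definition Phi :: "'r schema \<Rightarrow> 'r \<Rightarrow> ('v \<Rightarrow> nat) \<Rightarrow> 'v list \<Rightarrow> ('r, 'v, 'c) atom list \<Rightarrow> 'v list \<Rightarrow> 'v
    \<Rightarrow> 'r \<Rightarrow> ('r, 'c) fo" where
  "Phi S N ix vl Fs zs w R = (if R = N then PhiN ix vl Fs zs w else FAtom R (map FVar [0..<arity S R]))"

lemma fv_bodyf: "fo_fv (bodyf ix Fs zs b) \<subseteq> (\<Union>F\<in>set Fs. ix ` vars F) \<union> ix ` set zs \<union> {..<length zs} \<union> fo_fv b"
  unfolding bodyf_def fv_conjl using fv_atomf by (fastforce simp: in_set_conv_nth)

lemma fv_PhiN:
  assumes "set vl = (\<Union>F\<in>set Fs. vars F) \<union> set zs" "w \<in> (\<Union>F\<in>set Fs. vars F)"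
  shows "fo_fv (PhiN ix vl Fs zs w) \<subseteq> {..<Suc (length zs)}"
proof -
  have A: "fo_fv (bodyf ix Fs zs b) - set (map ix vl) \<subseteq> {..<length zs} \<union> (fo_fv b - ix ` set vl)" for b
    using fv_bodyf[of ix Fs zs b] assms(1) by auto
  have B: "fo_fv b - ix ` set vl \<subseteq> {..<Suc (length zs)}" if "b = FEq (FVar (ix w)) (FVar (length zs)) \<or> b = FNot (FEq (FVar (ix w)) (FVar (length zs)))" for b
    using that assms by auto
  have C: "fo_fv (exl (map ix vl) (bodyf ix Fs zs b)) \<subseteq> {..<Suc (length zs)}" if "b = FEq (FVar (ix w)) (FVar (length zs)) \<or> b = FNot (FEq (FVar (ix w)) (FVar (length zs)))" for b
    unfolding fv_exl using A[of b] B[OF that] by auto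
  show ?thesis unfolding PhiN_def using C by auto
qed

context hard begin

lemma w_in: "w \<in> (\<Union>F\<in>set Fs. vars F)"
  using sp unfolding seq_proof_def by (meson UN_iff nth_mem)

lemma eval_body_ex:
  fixes ix :: "'v \<Rightarrow> nat" and as :: "'c list"
  assumes inj: "inj_on ix ((\<Union>F\<in>set Fs. vars F) \<union> set zs)"
    and big: "\<forall>x. length zs < ix x"
    and vl: "set vl = (\<Union>F\<in>set Fs. vars F) \<union> set zs"
    and las: "length as = Suc (length zs)" and sas: "set as \<subseteq> DD" and adb: "adom db \<subseteq> DD"
    and bsem: "\<And>\<sigma>. fo_eval DD db \<sigma> b \<longleftrightarrow> R (\<sigma> (ix w)) (\<sigma> (length zs))"
  shows "fo_eval DD db (\<lambda>i. as ! i) (exl (map ix vl) (bodyf ix Fs zs b)) \<longleftrightarrow>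
         (\<exists>\<mu>. Pin \<mu> \<and> map \<mu> zs = take (length zs) as \<and> R (\<mu> w) (as ! length zs))"
proof -
  define V where "V = (\<Union>F\<in>set Fs. vars F) \<union> set zs"
  define k where "k = length zs"
  have notix: "j \<notin> set (map ix vl)" if "j \<le> k" for j using big that k_def by (metis imageE leD set_map)
  show ?thesis
  proof
    assume "fo_eval DD db (\<lambda>i. as ! i) (exl (map ix vl) (bodyf ix Fs zs b))"
    then obtain \<nu> where nu: "\<forall>i\<in>set (map ix vl). \<nu> i \<in> DD"
      "fo_eval DD db (\<lambda>j. if j \<in> set (map ix vl) then \<nu> j else as ! j) (bodyf ix Fs zs b)"
      unfolding eval_exl by blast
    define \<sigma> where "\<sigma> = (\<lambda>j. if j \<in> set (map ix vl) then \<nu> j else as ! j)"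
    have sk: "\<sigma> j = as ! j" if "j \<le> k" for j using notix[OF that] \<sigma>_def by simp
    have ev: "\<forall>f\<in>set (map (atomf ix) Fs @ map (\<lambda>j. FEq (FVar (ix (zs ! j))) (FVar j)) [0..<length zs]).
                fo_eval DD db \<sigma> f" "fo_eval DD db \<sigma> b"
      using nu(2) unfolding \<sigma>_def[symmetric] bodyf_def eval_conjl by auto
    define \<mu> where "\<mu> = \<sigma> \<circ> ix"
    have "Pin \<mu>" unfolding Pin_def
    proof
      fix F assume "F \<in> set Fs"
      then have "fo_eval DD db \<sigma> (atomf ix F)" using ev(1) by auto
      then show "img \<mu> F \<in> db" unfolding \<mu>_def eval_atomf .
    qed
    moreover have "map \<mu> zs = take (length zs) as"
    proof (rule nth_equalityI)
      show "length (map \<mu> zs) = length (take (length zs) as)" using las by simp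
      fix j assume "j < length (map \<mu> zs)"
      then have j: "j < k" by (simp add: k_def)
      then have "FEq (FVar (ix (zs ! j))) (FVar j) \<in> set (map (atomf ix) Fs @ map (\<lambda>j. FEq (FVar (ix (zs ! j))) (FVar j)) [0..<length zs])"
        using k_def by auto
      then have "fo_eval DD db \<sigma> (FEq (FVar (ix (zs ! j))) (FVar j))" using ev(1) by blast
      then have "\<mu> (zs ! j) = \<sigma> j" by (simp add: \<mu>_def)
      then show "map \<mu> zs ! j = take (length zs) as ! j" using sk[of j] j k_def by simp
    qed
    moreover have "R (\<mu> w) (as ! length zs)"
      using ev(2) bsem sk[of k] k_def by (simp add: \<mu>_def)
    ultimately show "\<exists>\<mu>. Pin \<mu> \<and> map \<mu> zs = take (length zs) as \<and> R (\<mu> w) (as ! length zs)" by blast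
  next
    assume "\<exists>\<mu>. Pin \<mu> \<and> map \<mu> zs = take (length zs) as \<and> R (\<mu> w) (as ! length zs)"
    then obtain \<mu> where mu: "Pin \<mu>" "map \<mu> zs = take (length zs) as" "R (\<mu> w) (as ! length zs)" by blast
    define \<nu> where "\<nu> = (\<lambda>i. \<mu> (inv_into V ix i))"
    have inj': "inj_on ix V" using inj V_def by simp
    have nux: "\<nu> (ix x) = \<mu> x" if "x \<in> V" for x using inv_into_f_f[OF inj' that] \<nu>_def by simp
    have muD: "\<mu> x \<in> DD" if xV: "x \<in> V" for x
    proof (cases "x \<in> set zs")
      case True
      then obtain j where j: "j < length zs" "zs ! j = x" by (auto simp: in_set_conv_nth)
      then have "\<mu> x = map \<mu> zs ! j" by simp
      also have "\<dots> = as ! j" using mu(2) j by simp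
      finally show ?thesis using sas j las by (metis in_mono less_SucI nth_mem)
    next
      case False
      then obtain F where F: "F \<in> set Fs" "x \<in> vars F" using xV V_def by auto
      then have "img \<mu> F \<in> db" using mu(1) by (simp add: Pin_def)
      then show ?thesis using inst_in_adom[OF _ F(2)] adb by blast
    qed
    define \<sigma> where "\<sigma> = (\<lambda>j. if j \<in> set (map ix vl) then \<nu> j else as ! j)"
    have sk: "\<sigma> j = as ! j" if "j \<le> k" for j using notix[OF that] \<sigma>_def by simp
    have sV: "\<sigma> (ix x) = \<mu> x" if "x \<in> V" for x using that vl V_def nux \<sigma>_def by auto
    have "fo_eval DD db \<sigma> (bodyf ix Fs zs b)"
      unfolding bodyf_def eval_conjl
    proof (intro conjI ballI)
      fix f assume "f \<in> set (map (atomf ix) Fs @ map (\<lambda>j. FEq (FVar (ix (zs ! j))) (FVar j)) [0..<length zs])"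
      then consider (a) F where "F \<in> set Fs" "f = atomf ix F"
        | (e) j where "j < length zs" "f = FEq (FVar (ix (zs ! j))) (FVar j)" by auto
      then show "fo_eval DD db \<sigma> f"
      proof cases
        case a
        have "img (\<sigma> \<circ> ix) F = img \<mu> F"
          by (rule img_agree) (use a sV V_def in auto)
        then show ?thesis using a mu(1) by (simp add: eval_atomf Pin_def)
      next
        case (e j)
        have zV: "zs ! j \<in> V" using e V_def by simp
        have "\<mu> (zs ! j) = as ! j" using mu(2) e by (metis nth_map nth_take)
        then show ?thesis using e sV[OF zV] sk[of j] k_def by simp
      qed
    next
      have "w \<in> V" using w_in V_def by simp
      then show "fo_eval DD db \<sigma> b" using bsem sV sk[of k] mu(3) k_def by simp
    qed
    moreover have "\<forall>i\<in>set (map ix vl). \<nu> i \<in> DD" using vl V_def nux muD by auto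
    ultimately show "fo_eval DD db (\<lambda>i. as ! i) (exl (map ix vl) (bodyf ix Fs zs b))"
      unfolding eval_exl \<sigma>_def by blast
  qed
qed

end

locale red = hard S q Z w zs Fs db
  for S :: "'r schema" and q :: "('r, 'v, 'c) atom set" and Z :: "'v set" and w :: 'v
    and zs :: "'v list" and Fs :: "('r, 'v, 'c) atom list" and db :: "('r, 'c) fact set" +
  fixes N :: 'r and ix :: "'v \<Rightarrow> nat" and vl :: "'v list"
  assumes Nq: "N \<notin> fst ` q" and arN: "arity S N = Suc (length zs)"
    and kN: "keylen S N = length zs" and mN: "rmode S N = ModeC"
    and inj: "inj_on ix ((\<Union>F\<in>set Fs. vars F) \<union> set zs)" and big: "\<forall>x. length zs < ix x"
    and vl: "set vl = (\<Union>F\<in>set Fs. vars F) \<union> set zs"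
begin

definition "TT = insert N (fst ` q)"
definition "PhiR = Phi S N ix vl Fs zs w"
definition "dbp = fo_map S TT PhiR db"
definition "DN = adom db \<union> fo_consts (PhiN ix vl Fs zs w)"
definition "uniq as \<longleftrightarrow> (\<exists>\<mu>. Pin \<mu> \<and> map \<mu> zs = take (length zs) as \<and> \<mu> w = as ! length zs) \<and>
   \<not> (\<exists>\<mu>. Pin \<mu> \<and> map \<mu> zs = take (length zs) as \<and> \<mu> w \<noteq> as ! length zs)"

lemma memN: "(N, as) \<in> dbp \<longleftrightarrow> length as = Suc (length zs) \<and> set as \<subseteq> DN \<and> uniq as"
proof -
  have e: "fo_eval DN db (\<lambda>i. as ! i) (PhiN ix vl Fs zs w) \<longleftrightarrow> uniq as"
    if l: "length as = Suc (length zs)" and s: "set as \<subseteq> DN"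
  proof -
    have a: "adom db \<subseteq> DN" by (simp add: DN_def)
    have 1: "fo_eval DN db (\<lambda>i. as ! i) (exl (map ix vl) (bodyf ix Fs zs (FEq (FVar (ix w)) (FVar (length zs)))))
      \<longleftrightarrow> (\<exists>\<mu>. Pin \<mu> \<and> map \<mu> zs = take (length zs) as \<and> \<mu> w = as ! length zs)"
      by (rule eval_body_ex[OF inj big vl l s a]) simp
    have 2: "fo_eval DN db (\<lambda>i. as ! i) (exl (map ix vl) (bodyf ix Fs zs (FNot (FEq (FVar (ix w)) (FVar (length zs))))))
      \<longleftrightarrow> (\<exists>\<mu>. Pin \<mu> \<and> map \<mu> zs = take (length zs) as \<and> \<mu> w \<noteq> as ! length zs)"
      by (rule eval_body_ex[OF inj big vl l s a]) simp
    show ?thesis unfolding PhiN_def uniq_def using 1 2 by simp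
  qed
  show ?thesis
    unfolding dbp_def fo_map_def TT_def PhiR_def Phi_def
    using e arN by (auto simp: DN_def)
qed

lemma memQ: "R \<noteq> N \<Longrightarrow> (R, as) \<in> dbp \<longleftrightarrow> (R, as) \<in> db \<and> R \<in> fst ` q"
proof -
  assume RN: "R \<noteq> N"
  have ar: "(R, as) \<in> db \<Longrightarrow> length as = arity S R" using db by (force simp: is_db_def)
  have ad: "(R, as) \<in> db \<Longrightarrow> set as \<subseteq> adom db" by (force simp: adom_def)
  have mp: "length as = arity S R \<Longrightarrow> map (\<lambda>i. as ! i) [0..<arity S R] = as"
    by (metis map_nth)
  show ?thesis
    unfolding dbp_def fo_map_def TT_def PhiR_def Phi_def
    using RN ar ad mp by (auto simp: comp_def)
qed

lemma finite_DN: "finite DN"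
  using db finite_adom finite_consts by (auto simp: DN_def is_db_def)

lemma take_nth_app: "length as = Suc k \<Longrightarrow> as = take k as @ [as ! k]"
  by (metis lessI take_Suc_conv_app_nth take_all order_refl)

lemma dbp_cases: "A \<in> dbp \<Longrightarrow> (fst A = N \<and> length (snd A) = Suc (length zs) \<and> set (snd A) \<subseteq> DN \<and> uniq (snd A))
   \<or> (fst A \<noteq> N \<and> A \<in> db \<and> fst A \<in> fst ` q)"
proof -
  assume A: "A \<in> dbp"
  obtain R as where Ra: "A = (R, as)" by fastforce
  show ?thesis
  proof (cases "R = N")
    case True
    then show ?thesis using A Ra memN[of as] by simp
  next
    case False
    then show ?thesis using A Ra memQ[of R as] by simp
  qed
qed

lemma db_len: "A \<in> db \<Longrightarrow> length (snd A) = arity S (fst A)"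
  using db by (simp add: is_db_def)

lemma db_cons: "A \<in> db \<Longrightarrow> B \<in> db \<Longrightarrow> rmode S (fst A) = ModeC \<Longrightarrow> key_equal S A B \<Longrightarrow> A = B"
  using db unfolding is_db_def by blast

lemma dbp_is_db: "is_db S dbp"
  unfolding is_db_def
proof (intro conjI ballI impI)
  have "dbp \<subseteq> db \<union> ({N} \<times> {as. set as \<subseteq> DN \<and> length as = Suc (length zs)})"
  proof
    fix A assume A: "A \<in> dbp"
    show "A \<in> db \<union> ({N} \<times> {as. set as \<subseteq> DN \<and> length as = Suc (length zs)})"
      using dbp_cases[OF A] by (cases A) auto
  qed
  moreover have "finite ({N} \<times> {as. set as \<subseteq> DN \<and> length as = Suc (length zs)})"
    using finite_DN finite_lists_length_eq by blast
  moreover have "finite db" using db by (simp add: is_db_def)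
  ultimately show "finite dbp" by (meson finite_Un finite_subset)
next
  fix A assume A: "A \<in> dbp"
  show "length (snd A) = arity S (fst A)"
    using dbp_cases[OF A] arN db_len by auto
next
  fix A B assume A: "A \<in> dbp" and B: "B \<in> dbp" and h: "rmode S (fst A) = ModeC \<and> key_equal S A B"
  obtain R as where Ra: "A = (R, as)" by fastforce
  obtain R' bs where Rb: "B = (R', bs)" by fastforce
  have RR: "R' = R" using h Ra Rb by (simp add: key_equal_def)
  show "A = B"
  proof (cases "R = N")
    case True
    have la: "length as = Suc (length zs)" "uniq as" using A Ra True memN by auto
    have lb: "length bs = Suc (length zs)" "uniq bs" using B Rb True RR memN by auto
    have tk: "take (length zs) as = take (length zs) bs" using h Ra Rb True RR kN by (simp add: key_equal_def)
    obtain \<mu> where mu: "Pin \<mu>" "map \<mu> zs = take (length zs) as" "\<mu> w = as ! length zs"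
      using la(2) unfolding uniq_def by blast
    have "\<not> (\<exists>\<mu>. Pin \<mu> \<and> map \<mu> zs = take (length zs) bs \<and> \<mu> w \<noteq> bs ! length zs)"
      using lb(2) unfolding uniq_def by blast
    then have "\<mu> w = bs ! length zs" using mu tk by metis
    then have "as ! length zs = bs ! length zs" using mu by simp
    then have "as = bs" using take_nth_app[OF la(1)] take_nth_app[OF lb(1)] tk by metis
    then show ?thesis using Ra Rb RR by simp
  next
    case False
    have "A \<in> db" "B \<in> db" using A B Ra Rb RR False memQ by auto
    then show ?thesis using h db_cons by blast
  qed
qed

end

context red begin

definition "N0 = (N, map Var zs @ [Var w])"

lemma img_N0: "img \<theta> N0 = (N, map \<theta> zs @ [\<theta> w])"
  by (simp add: img_def N0_def)

lemma emb_ins: "emb r (insert N0 q) \<theta> \<longleftrightarrow> img \<theta> N0 \<in> r \<and> emb r q \<theta>"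
  by (simp add: emb_def)

lemma fst_q_ne: "F \<in> q \<Longrightarrow> fst F \<noteq> N"
  using Nq by force

lemma dbp_consN: "A \<in> dbp \<Longrightarrow> B \<in> dbp \<Longrightarrow> fst A = N \<Longrightarrow> key_equal S A B \<Longrightarrow> A = B"
  using dbp_is_db mN unfolding is_db_def by metis

lemma back_dir:
  assumes c: "dbp \<in> certainty S (insert N0 q)"
  shows "db \<in> certainty S q"
  unfolding certainty_def
proof (intro CollectI conjI allI impI)
  show "is_db S db" by (rule db)
  fix r assume r: "is_repair S db r"
  have rdb: "r \<subseteq> db" and cr: "consistent S r" using r by (auto simp: is_repair_def)
  define r' where "r' = {A \<in> r. fst A \<in> fst ` q} \<union> {A \<in> dbp. fst A = N}"
  have sub: "r' \<subseteq> dbp"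
  proof
    fix A assume "A \<in> r'"
    then consider "A \<in> r" "fst A \<in> fst ` q" | "A \<in> dbp" by (auto simp: r'_def)
    then show "A \<in> dbp"
    proof cases
      case 1
      then have "fst A \<noteq> N" using Nq by auto
      then show ?thesis using memQ[of "fst A" "snd A"] 1 rdb by auto
    qed
  qed
  have cons: "consistent S r'"
    unfolding consistent_def
  proof (intro ballI impI)
    fix A B assume A: "A \<in> r'" and B: "B \<in> r'" and k: "key_equal S A B"
    have fe: "fst A = fst B" using k by (simp add: key_equal_def)
    show "A = B"
    proof (cases "fst A = N")
      case True
      then show ?thesis using A B sub k dbp_consN by blast
    next
      case False
      then have "A \<in> r" "B \<in> r" using A B fe by (auto simp: r'_def)
      then show ?thesis using cr k by (simp add: consistent_def)
    qed
  qed
  have rep: "is_repair S dbp r'"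
    unfolding is_repair_def
  proof (intro conjI allI impI)
    show "r' \<subseteq> dbp" "consistent S r'" using sub cons by auto
    fix r'' assume h: "r' \<subseteq> r'' \<and> r'' \<subseteq> dbp \<and> consistent S r''"
    show "r'' = r'"
    proof (rule ccontr)
      assume "r'' \<noteq> r'"
      then obtain x where x: "x \<in> r''" "x \<notin> r'" using h by blast
      have xN: "fst x \<noteq> N" using x h by (auto simp: r'_def)
      then have xdb: "x \<in> db" "fst x \<in> fst ` q" using x h memQ[of "fst x" "snd x"] by auto
      then have "x \<notin> r" using x by (auto simp: r'_def)
      then obtain y where y: "y \<in> r" "key_equal S x y" "y \<noteq> x"
        using repair_conflict[OF r xdb(1)] by blast
      have "fst y = fst x" using y by (simp add: key_equal_def)
      then have "y \<in> r'" using y xdb by (auto simp: r'_def)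
      then have "y \<in> r''" using h by blast
      then show False using h x y unfolding consistent_def by blast
    qed
  qed
  then have "satisfies r' (insert N0 q)" using c by (simp add: certainty_def)
  then obtain \<theta> where th: "emb r' (insert N0 q) \<theta>" by (auto simp: satisfies_emb)
  have "emb r q \<theta>" unfolding emb_def
  proof
    fix F assume F: "F \<in> q"
    then have "img \<theta> F \<in> r'" using th by (simp add: emb_def)
    moreover have "fst (img \<theta> F) \<noteq> N" using F fst_q_ne by simp
    ultimately show "img \<theta> F \<in> r" by (auto simp: r'_def)
  qed
  then show "satisfies r q" by (auto simp: satisfies_emb)
qed

lemma fwd_dir:
  assumes c: "db \<in> certainty S q"
  shows "dbp \<in> certainty S (insert N0 q)"
  unfolding certainty_def
proof (intro CollectI conjI allI impI)
  show "is_db S dbp" by (rule dbp_is_db)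
  fix r' assume r': "is_repair S dbp r'"
  show "satisfies r' (insert N0 q)"
  proof (rule ccontr)
    assume ns: "\<not> satisfies r' (insert N0 q)"
    define r0 where "r0 = {A \<in> r'. fst A \<noteq> N}"
    have r0db: "r0 \<subseteq> db"
    proof
      fix A assume "A \<in> r0"
      then have "A \<in> dbp" "fst A \<noteq> N" using r' by (auto simp: r0_def is_repair_def)
      then show "A \<in> db" using memQ[of "fst A" "snd A"] by auto
    qed
    have cr': "consistent S r'" using r' by (simp add: is_repair_def)
    have "r0 \<subseteq> r'" by (auto simp: r0_def)
    then have c0: "consistent S r0" using cr' unfolding consistent_def by blast
    have fdb: "finite db" using db by (simp add: is_db_def)
    obtain r where r0r: "r0 \<subseteq> r" and r: "is_repair S db r"
      using repair_ext[OF fdb r0db c0] by blast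
    have rdb: "r \<subseteq> db" and cr: "consistent S r" using r by (auto simp: is_repair_def)
    have embr': "emb r' q \<theta>" if th: "emb r q \<theta>" for \<theta>
      unfolding emb_def
    proof
      fix F assume F: "F \<in> q"
      define A where "A = img \<theta> F"
      have Ar: "A \<in> r" using th F A_def by (simp add: emb_def)
      have AN: "fst A \<noteq> N" using F fst_q_ne A_def by simp
      have "fst A \<in> fst ` q" using F A_def by simp
      then have Adbp: "A \<in> dbp" using memQ[of "fst A" "snd A"] AN Ar rdb by auto
      show "img \<theta> F \<in> r'"
      proof (rule ccontr)
        assume "img \<theta> F \<notin> r'"
        then obtain y where y: "y \<in> r'" "key_equal S A y" "y \<noteq> A"
          using repair_conflict[OF r' Adbp] A_def by blast
        have "fst y = fst A" using y by (simp add: key_equal_def)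
        then have "y \<in> r" using y AN r0r by (auto simp: r0_def)
        then show False using cr Ar y unfolding consistent_def by blast
      qed
    qed
    have amb: "\<forall>c d. (c, d) \<in> SS r \<longrightarrow> (\<exists>\<mu>. Pin \<mu> \<and> map \<mu> zs = c \<and> \<mu> w \<noteq> d)"
    proof (intro allI impI)
      fix c d assume "(c, d) \<in> SS r"
      then obtain \<theta> where th: "emb r q \<theta>" "c = map \<theta> zs" "d = \<theta> w" unfolding SS_def by blast
      show "\<exists>\<mu>. Pin \<mu> \<and> map \<mu> zs = c \<and> \<mu> w \<noteq> d"
      proof (rule ccontr)
        assume na: "\<not> (\<exists>\<mu>. Pin \<mu> \<and> map \<mu> zs = c \<and> \<mu> w \<noteq> d)"
        define as where "as = map \<theta> zs @ [\<theta> w]"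
        have tk: "take (length zs) as = c" "as ! length zs = d" using th as_def by (auto simp: nth_append)
        have pin: "Pin \<theta>" using th(1) Fs_q rdb by (auto simp: Pin_def emb_def)
        have ex1: "\<exists>\<mu>. Pin \<mu> \<and> map \<mu> zs = c \<and> \<mu> w = d" using pin th by blast
        have u: "uniq as" unfolding uniq_def tk using ex1 na by simp
        have sD: "set as \<subseteq> DN"
        proof -
          obtain F where F: "F \<in> q" "Z \<subseteq> vars F" using F0 by blast
          have "img \<theta> F \<in> db" using th(1) F rdb by (auto simp: emb_def)
          then have "\<forall>z\<in>set zs. \<theta> z \<in> adom db" using F(2) zsZ inst_in_adom[of \<theta> F db] by auto
          moreover obtain G where G: "G \<in> set Fs" "w \<in> vars G" using w_in by blast
          moreover have "img \<theta> G \<in> db" using pin G by (simp add: Pin_def)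
          ultimately show ?thesis using inst_in_adom[of \<theta> G db] as_def by (auto simp: DN_def)
        qed
        have las: "length as = Suc (length zs)" using as_def by simp
        have "(N, as) \<in> dbp" using memN[of as] u sD las by blast
        moreover have "img \<theta> N0 = (N, as)" using img_N0 as_def by simp
        ultimately have Nd: "img \<theta> N0 \<in> dbp" by simp
        have "img \<theta> N0 \<in> r'"
        proof (rule ccontr)
          assume "img \<theta> N0 \<notin> r'"
          then obtain y where y: "y \<in> r'" "key_equal S (img \<theta> N0) y" "y \<noteq> img \<theta> N0"
            using repair_conflict[OF r' Nd] by blast
          have "y \<in> dbp" using y r' by (auto simp: is_repair_def)
          have "fst (img \<theta> N0) = N" by (simp add: img_N0)
          then show False using dbp_consN[OF Nd \<open>y \<in> dbp\<close>] y by blast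
        qed
        then have "emb r' (insert N0 q) \<theta>" using embr'[OF th(1)] emb_ins by simp
        then show False using ns by (auto simp: satisfies_emb)
      qed
    qed
    obtain rs where rs: "is_repair S db rs" "SS rs = {}" using no_emb[OF r amb] by blast
    have "satisfies rs q" using c rs(1) by (simp add: certainty_def)
    then obtain \<theta> where "emb rs q \<theta>" by (auto simp: satisfies_emb)
    then have "(map \<theta> zs, \<theta> w) \<in> SS rs" unfolding SS_def by blast
    then show False using rs(2) by simp
  qed
qed

lemma cert_iff: "db \<in> certainty S q \<longleftrightarrow> dbp \<in> certainty S (insert N0 q)"
  using fwd_dir back_dir by blast

end

lemma fd_mono: "x \<in> fd_closure \<Sigma> X \<Longrightarrow> \<Sigma> \<subseteq> \<Sigma>' \<Longrightarrow> x \<in> fd_closure \<Sigma>' X"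
proof (induction rule: fd_closure.induct)
  case (base x) then show ?case by (simp add: fd_closure.base)
next
  case (step L R y) then show ?case by (meson fd_closure.step subsetD)
qed

lemma att_sym: "(a, b) \<in> att_step S q F \<Longrightarrow> (b, a) \<in> att_step S q F"
  by (auto simp: att_step_def)

lemma star_sym: "(a, b) \<in> (att_step S q F)\<^sup>* \<Longrightarrow> (b, a) \<in> (att_step S q F)\<^sup>*"
proof (induction rule: rtrancl_induct)
  case base then show ?case by simp
next
  case (step y z)
  then show ?case using att_sym by (metis converse_rtrancl_into_rtrancl)
qed

locale cyc =
  fixes S :: "'r schema" and q :: "('r, 'v, 'c) atom set" and Z :: "'v set" and w :: 'v
    and zs :: "'v list" and Fs :: "('r, 'v, 'c) atom list" and N :: 'r
  assumes sp: "seq_proof S q Z w Fs"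
    and na: "\<forall>F\<in>set Fs. \<forall>x\<in>insert w Z. \<not> attacks_var S q F x"
    and F0: "\<exists>F\<in>q. Z \<subseteq> vars F"
    and zsZ: "set zs = Z"
    and Nq: "N \<notin> fst ` q" and kN: "keylen S N = length zs" and mN: "rmode S N = ModeC"
begin

definition N0 :: "('r, 'v, 'c) atom" where "N0 = (N, map Var zs @ [Var w])"
definition "q' = insert N0 q"

lemma key_N0: "key S N0 = Z"
  using kN zsZ by (auto simp: key_def N0_def)

lemma vars_N0: "vars N0 = insert w Z"
  using zsZ by (auto simp: vars_def N0_def)

lemma N0_notin: "N0 \<notin> q"
  using Nq by (force simp: N0_def)

lemma Fs_q: "set Fs \<subseteq> q" using sp by (simp add: seq_proof_def)

lemma Fplus_mono: "F \<in> q \<Longrightarrow> Fplus S q F \<subseteq> Fplus S q' F"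
proof
  fix x assume F: "F \<in> q" and x: "x \<in> Fplus S q F"
  have sub: "Kfd S (q - {F}) \<union> Kfd S (cpart S q) \<subseteq> Kfd S (q' - {F}) \<union> Kfd S (cpart S q')"
    unfolding Kfd_def cpart_def q'_def by blast
  have "x \<in> fd_closure (Kfd S (q - {F}) \<union> Kfd S (cpart S q)) (key S F)"
    using x by (simp add: Fplus_def fd_entails_def)
  then have "x \<in> fd_closure (Kfd S (q' - {F}) \<union> Kfd S (cpart S q')) (key S F)"
    by (rule fd_mono[OF _ sub])
  then show "x \<in> Fplus S q' F" by (simp add: Fplus_def fd_entails_def)
qed

lemma N0_no_step: "(N0, G) \<notin> att_step S q' N0"
proof
  assume "(N0, G) \<in> att_step S q' N0"
  then have "\<exists>x. x \<in> vars N0 \<and> x \<notin> Fplus S q' N0" by (auto simp: att_step_def)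
  then obtain x where x: "x \<in> vars N0" "x \<notin> Fplus S q' N0" by blast
  have mem: "(key S N0, vars N0) \<in> Kfd S (q' - {N0}) \<union> Kfd S (cpart S q')"
    using mN unfolding Kfd_def cpart_def q'_def N0_def by auto
  have "x \<in> fd_closure (Kfd S (q' - {N0}) \<union> Kfd S (cpart S q')) (key S N0)"
    apply (rule fd_closure.step[OF mem])
     apply (simp add: fd_closure.base)
    by (rule x(1))
  then have "x \<in> Fplus S q' N0" by (simp add: Fplus_def fd_entails_def)
  then show False using x by blast
qed

lemma N0_no_attack: "\<not> attacks S q' N0 G"
proof
  assume "attacks S q' N0 G"
  then have "(N0, G) \<in> (att_step S q' N0)\<^sup>+" by (simp add: attacks_def)
  then obtain y where "(N0, y) \<in> att_step S q' N0" by (meson tranclD)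
  then show False using N0_no_step by blast
qed

lemma conn:
  assumes F: "F \<in> q" and G0: "G0 \<in> q" "Z \<subseteq> vars G0" and u: "u \<in> insert w Z" "u \<notin> Fplus S q F"
  shows "\<exists>H\<in>q. u \<in> vars H \<and> (G0, H) \<in> (att_step S q F)\<^sup>*"
proof (cases "u \<in> Z")
  case True
  then show ?thesis using G0 by blast
next
  case False
  then have uw: "u = w" using u by simp
  define P where "P = Fplus S q F"
  define VF where "VF = {x. x \<notin> P \<and> (\<exists>G\<in>q. x \<in> vars G \<and> (F, G) \<in> (att_step S q F)\<^sup>*)}"
  define R where "R = {x. \<exists>G\<in>q. x \<in> vars G \<and> (G0, G) \<in> (att_step S q F)\<^sup>*}"
  define W where "W = P \<union> R \<union> (if F \<in> set Fs then VF else {})"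
  have ZW: "Z \<subseteq> W" using G0 unfolding W_def R_def by blast
  have clos: "vars G \<subseteq> P" if "G \<in> q" "G \<noteq> F" "key S G \<subseteq> P" for G
  proof
    fix y assume y: "y \<in> vars G"
    have mem: "(key S G, vars G) \<in> Kfd S (q - {F}) \<union> Kfd S (cpart S q)"
      using that unfolding Kfd_def by blast
    have kk: "\<forall>l\<in>key S G. l \<in> fd_closure (Kfd S (q - {F}) \<union> Kfd S (cpart S q)) (key S F)"
      using that(3) unfolding P_def Fplus_def fd_entails_def by blast
    have "y \<in> fd_closure (Kfd S (q - {F}) \<union> Kfd S (cpart S q)) (key S F)"
      by (rule fd_closure.step[OF mem kk y])
    then show "y \<in> P" unfolding P_def by (simp add: Fplus_def fd_entails_def)
  qed
  have allW: "\<forall>i<length Fs. vars (Fs ! i) \<subseteq> W"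
  proof (intro allI impI)
    fix i show "i < length Fs \<Longrightarrow> vars (Fs ! i) \<subseteq> W"
    proof (induction i rule: less_induct)
      case (less i)
      define G where "G = Fs ! i"
      have Gq: "G \<in> q" using less.prems Fs_q G_def by auto
      have kW: "key S G \<subseteq> W"
      proof -
        have "key S G \<subseteq> Z \<union> (\<Union>j<i. vars (Fs ! j))" using sp less.prems G_def by (simp add: seq_proof_def)
        moreover have "(\<Union>j<i. vars (Fs ! j)) \<subseteq> W" using less.IH less.prems by auto
        ultimately show ?thesis using ZW by blast
      qed
      show ?case unfolding G_def[symmetric]
      proof (cases "G = F")
        case True
        then have "F \<in> set Fs" using less.prems G_def by auto
        moreover have "vars F \<subseteq> P \<union> VF" using F unfolding VF_def by blast
        ultimately show "vars G \<subseteq> W" using True unfolding W_def by auto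
      next
        case GF: False
        show "vars G \<subseteq> W"
        proof (cases "key S G \<subseteq> P")
          case True
          then show ?thesis using clos[OF Gq GF] unfolding W_def by blast
        next
          case False
          then obtain v where v: "v \<in> key S G" "v \<notin> P" by blast
          then have vW: "v \<in> W" using kW by blast
          have vG: "v \<in> vars G" using v(1) key_sub_vars[of S G] by blast
          show ?thesis
          proof (cases "v \<in> R")
            case True
            then obtain H where H: "H \<in> q" "v \<in> vars H" "(G0, H) \<in> (att_step S q F)\<^sup>*"
              unfolding R_def by blast
            have "(H, G) \<in> att_step S q F" using H Gq vG v(2) unfolding att_step_def P_def by blast
            then have "(G0, G) \<in> (att_step S q F)\<^sup>*" using H(3) by (meson rtrancl.rtrancl_into_rtrancl)
            then show ?thesis using Gq unfolding W_def R_def by blast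
          next
            case False
            then have "v \<in> VF" "F \<in> set Fs" using vW v(2) unfolding W_def by (auto split: if_splits)
            then obtain H where H: "H \<in> q" "v \<in> vars H" "(F, H) \<in> (att_step S q F)\<^sup>*"
              unfolding VF_def by blast
            have "(H, G) \<in> att_step S q F" using H Gq vG v(2) unfolding att_step_def P_def by blast
            then have "(F, G) \<in> (att_step S q F)\<^sup>*" using H(3) by (meson rtrancl.rtrancl_into_rtrancl)
            then have "vars G \<subseteq> P \<union> VF" using Gq unfolding VF_def by blast
            then show ?thesis using \<open>F \<in> set Fs\<close> unfolding W_def by auto
          qed
        qed
      qed
    qed
  qed
  obtain k where k: "k < length Fs" "w \<in> vars (Fs ! k)" using sp by (auto simp: seq_proof_def)
  then have wW: "w \<in> W" using allW by blast
  have wP: "w \<notin> P" using u uw P_def by simp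
  have wV: "F \<in> set Fs \<Longrightarrow> w \<notin> VF"
  proof
    assume "F \<in> set Fs" "w \<in> VF"
    then have "attacks_var S q F w" using F unfolding attacks_var_def VF_def P_def by blast
    then show False using na \<open>F \<in> set Fs\<close> by blast
  qed
  have "w \<in> R" using wW wP wV unfolding W_def by (auto split: if_splits)
  then show ?thesis using uw unfolding R_def by blast
qed

end

context cyc begin

lemma transfer:
  assumes F: "F \<in> q" and st: "(A, B) \<in> (att_step S q' F)\<^sup>*" and A: "A \<in> q"
  shows "(B \<in> q \<longrightarrow> (A, B) \<in> (att_step S q F)\<^sup>*) \<and>
         (B = N0 \<longrightarrow> (\<exists>C\<in>q. (A, C) \<in> (att_step S q F)\<^sup>* \<and> (\<exists>u\<in>vars C \<inter> insert w Z. u \<notin> Fplus S q' F)))"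
  using st
proof (induction rule: rtrancl_induct)
  case base
  then show ?case using A N0_notin by auto
next
  case (step B C)
  obtain x where x: "x \<in> vars B" "x \<in> vars C" "x \<notin> Fplus S q' F" and BC: "B \<in> q'" "C \<in> q'"
    using step.hyps(2) unfolding att_step_def by blast
  have xq: "x \<notin> Fplus S q F" using x(3) Fplus_mono[OF F] by blast
  obtain G0 where G0: "G0 \<in> q" "Z \<subseteq> vars G0" using F0 by blast
  show ?case
  proof (cases "B = N0")
    case False
    then have Bq: "B \<in> q" using BC by (simp add: q'_def)
    have AB: "(A, B) \<in> (att_step S q F)\<^sup>*" using step.IH Bq by blast
    show ?thesis
    proof (intro conjI impI)
      assume Cq: "C \<in> q"
      have "(B, C) \<in> att_step S q F" using Bq Cq x xq unfolding att_step_def by blast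
      then show "(A, C) \<in> (att_step S q F)\<^sup>*" using AB by (meson rtrancl.rtrancl_into_rtrancl)
    next
      assume "C = N0"
      then have "x \<in> insert w Z" using x(2) vars_N0 by simp
      then show "\<exists>C\<in>q. (A, C) \<in> (att_step S q F)\<^sup>* \<and> (\<exists>u\<in>vars C \<inter> insert w Z. u \<notin> Fplus S q' F)"
        using Bq AB x by blast
    qed
  next
    case True
    then obtain C' u where C': "C' \<in> q" "(A, C') \<in> (att_step S q F)\<^sup>*" "u \<in> vars C'" "u \<in> insert w Z"
      "u \<notin> Fplus S q' F" using step.IH by blast
    show ?thesis
    proof (intro conjI impI)
      assume Cq: "C \<in> q"
      have xZ: "x \<in> insert w Z" using x(1) True vars_N0 by simp
      have uq: "u \<notin> Fplus S q F" using C'(5) Fplus_mono[OF F] by blast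
      obtain Hu where Hu: "Hu \<in> q" "u \<in> vars Hu" "(G0, Hu) \<in> (att_step S q F)\<^sup>*"
        using conn[OF F G0 C'(4) uq] by blast
      obtain Hx where Hx: "Hx \<in> q" "x \<in> vars Hx" "(G0, Hx) \<in> (att_step S q F)\<^sup>*"
        using conn[OF F G0 xZ xq] by blast
      have s1: "(C', Hu) \<in> att_step S q F" using C' Hu uq unfolding att_step_def by blast
      have s2: "(Hu, G0) \<in> (att_step S q F)\<^sup>*" using Hu(3) star_sym by metis
      have s3: "(Hx, C) \<in> att_step S q F" using Hx Cq x(2) xq unfolding att_step_def by blast
      have "(A, Hu) \<in> (att_step S q F)\<^sup>*" using C'(2) s1 by (meson rtrancl.rtrancl_into_rtrancl)
      then have "(A, G0) \<in> (att_step S q F)\<^sup>*" using s2 by (meson rtrancl_trans)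
      then have "(A, Hx) \<in> (att_step S q F)\<^sup>*" using Hx(3) by (meson rtrancl_trans)
      then show "(A, C) \<in> (att_step S q F)\<^sup>*" using s3 by (meson rtrancl.rtrancl_into_rtrancl)
    next
      assume "C = N0"
      then show "\<exists>C\<in>q. (A, C) \<in> (att_step S q F)\<^sup>* \<and> (\<exists>u\<in>vars C \<inter> insert w Z. u \<notin> Fplus S q' F)"
        using C' by blast
    qed
  qed
qed

lemma attacks_transfer:
  assumes F: "F \<in> q" and G: "G \<in> q" and a: "attacks S q' F G"
  shows "attacks S q F G"
proof -
  have ne: "F \<noteq> G" using a by (simp add: attacks_def)
  have "(F, G) \<in> (att_step S q' F)\<^sup>+" using a by (simp add: attacks_def)
  then have "(F, G) \<in> (att_step S q' F)\<^sup>*" by (rule trancl_into_rtrancl)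
  then have "(F, G) \<in> (att_step S q F)\<^sup>*" using transfer[OF F _ F] G by blast
  then have "(F, G) \<in> (att_step S q F)\<^sup>+" using ne by (meson rtranclD)
  then show ?thesis using F G ne by (simp add: attacks_def)
qed

lemma strong_transfer:
  assumes F: "F \<in> q" and G: "G \<in> q" and a: "strong_attack S q' F G"
  shows "strong_attack S q F G"
proof -
  have at: "attacks S q F G" using attacks_transfer[OF F G] a by (simp add: strong_attack_def)
  obtain y where y: "y \<in> key S G" "\<not> fd_entails (Kfd S q') (key S F) y"
    using a by (auto simp: strong_attack_def)
  have sub: "Kfd S q \<subseteq> Kfd S q'" unfolding Kfd_def q'_def by blast
  have "\<not> fd_entails (Kfd S q) (key S F) y"
  proof
    assume "fd_entails (Kfd S q) (key S F) y"
    then have "y \<in> fd_closure (Kfd S q') (key S F)" using fd_mono[OF _ sub] by (simp add: fd_entails_def)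
    then show False using y(2) by (simp add: fd_entails_def)
  qed
  then show ?thesis using at y(1) by (auto simp: strong_attack_def)
qed

lemma cycle_transfer:
  assumes "has_strong_cycle S q'"
  shows "has_strong_cycle S q"
proof -
  obtain L where L: "L \<noteq> []" "distinct L"
    "\<forall>i<length L. attacks S q' (L ! i) (L ! (Suc i mod length L))"
    "\<exists>i<length L. strong_attack S q' (L ! i) (L ! (Suc i mod length L))"
    using assms unfolding has_strong_cycle_def by blast
  have inq: "L ! i \<in> q" if "i < length L" for i
  proof -
    have a: "attacks S q' (L ! i) (L ! (Suc i mod length L))" using L(3) that by blast
    then have "L ! i \<in> q'" by (simp add: attacks_def)
    moreover have "L ! i \<noteq> N0" using a N0_no_attack by metis
    ultimately show ?thesis by (simp add: q'_def)
  qed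
  have modlt: "Suc i mod length L < length L" for i using L(1) by simp
  have "\<forall>i<length L. attacks S q (L ! i) (L ! (Suc i mod length L))"
    using L(3) attacks_transfer inq modlt by blast
  moreover have "\<exists>i<length L. strong_attack S q (L ! i) (L ! (Suc i mod length L))"
    using L(4) strong_transfer inq modlt by blast
  ultimately show ?thesis using L(1,2) unfolding has_strong_cycle_def by blast
qed

end

lemma finite_vars: "finite (vars F)"
proof -
  have "vars F = Var -` set (snd F)" by (auto simp: vars_def)
  then show ?thesis using finite_vimageI[of "set (snd F)" Var] by (simp add: inj_def)
qed

theorem lemma28:
  fixes S :: "'r schema" and q :: "('r, 'v, 'c) atom set"
    and Z :: "'v set" and w :: 'v and zs :: "'v list" and N :: 'r
  assumes "infinite (UNIV :: 'c set)"
    and "wf_schema S"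
    and "sjf_query S q"
    and "internal_fd S q Z w"
    and "distinct zs" and "set zs = Z"
    and "N \<notin> fst ` q"
    and "arity S N = length zs + 1" and "keylen S N = length zs" and "rmode S N = ModeC"
  shows "fo_reduction S (certainty S q) (certainty S (insert (N, map Var zs @ [Var w]) q))
     \<and> (\<not> has_strong_cycle S q \<longrightarrow> \<not> has_strong_cycle S (insert (N, map Var zs @ [Var w]) q))"
proof -
  note sjf = assms(3) and zsZ = assms(6) and Nq = assms(7) and arN0 = assms(8)
    and kN = assms(9) and mN = assms(10)
  have arN: "arity S N = Suc (length zs)" using arN0 by simp
  obtain Fs where sp: "seq_proof S q Z w Fs"
    and na: "\<forall>F\<in>set Fs. \<forall>x\<in>insert w Z. \<not> attacks_var S q F x"
    and F0: "\<exists>F\<in>q. Z \<subseteq> vars F"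
    using assms(4) unfolding internal_fd_def by blast
  interpret C: cyc S q Z w zs Fs N
    using sp na F0 zsZ Nq kN mN by (unfold_locales) auto
  have part2: "\<not> has_strong_cycle S q \<longrightarrow> \<not> has_strong_cycle S (insert (N, map Var zs @ [Var w]) q)"
    using C.cycle_transfer unfolding C.q'_def C.N0_def by blast
  define V where "V = (\<Union>F\<in>set Fs. vars F) \<union> set zs"
  have finV: "finite V" unfolding V_def by (auto simp: finite_vars)
  obtain f :: "'v \<Rightarrow> nat" and n where f: "f ` V = {i. i < n}" "inj_on f V"
    using finite_imp_inj_to_nat_seg[OF finV] by blast
  define ix where "ix = (\<lambda>x. Suc (length zs) + f x)"
  have inj: "inj_on ix V" using f(2) unfolding ix_def inj_on_def by auto
  have big: "\<forall>x. length zs < ix x" unfolding ix_def by simp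
  obtain vl where vl: "set vl = V" using finite_list[OF finV] by blast
  have w_in: "w \<in> (\<Union>F\<in>set Fs. vars F)"
    using sp unfolding seq_proof_def by (meson UN_iff nth_mem)
  define T where "T = insert N (fst ` q)"
  define PhiX where "PhiX = Phi S N ix vl Fs zs w"
  have finT: "finite T" using sjf unfolding T_def sjf_query_def by simp
  have fv: "\<forall>R\<in>T. fo_fv (PhiX R) \<subseteq> {..<arity S R}"
  proof
    fix R assume "R \<in> T"
    show "fo_fv (PhiX R) \<subseteq> {..<arity S R}"
    proof (cases "R = N")
      case True
      then show ?thesis using fv_PhiN[of vl Fs zs w ix] vl w_in arN unfolding PhiX_def Phi_def V_def
        by simp
    next
      case False
      then show ?thesis unfolding PhiX_def Phi_def by auto
    qed
  qed
  have main: "is_db S (fo_map S T PhiX db) \<and>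
      (db \<in> certainty S q \<longleftrightarrow> fo_map S T PhiX db \<in> certainty S (insert (N, map Var zs @ [Var w]) q))"
    if db: "is_db S db" for db
  proof -
    interpret R: red S q Z w zs Fs db N ix vl
      using sjf sp na F0 zsZ db Nq arN kN mN inj big vl unfolding V_def
      by (unfold_locales) auto
    have eq: "R.dbp = fo_map S T PhiX db"
      unfolding R.dbp_def R.TT_def R.PhiR_def T_def PhiX_def by simp
    show ?thesis using R.dbp_is_db R.cert_iff unfolding eq R.N0_def by simp
  qed
  have "fo_reduction S (certainty S q) (certainty S (insert (N, map Var zs @ [Var w]) q))"
    unfolding fo_reduction_def using finT fv main by blast
  then show ?thesis using part2 by simp
qed

end
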